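(* $\mathrm{Aut}_{\mathbb Z}(L)$ is equal to each of the groups $\langle -(x\,y)\rangle\ltimes G$, $\langle -(y\,z)\rangle\ltimes G$, $\langle -(z\,x)\rangle\ltimes G$. In particular $\mathrm{Aut}_{\mathbb Z}(L)\cong\mathbb Z_2\ltimes G$.
   Context: $\mathbb F$ is a field of characteristic zero, $\mathfrak{sl}_2$ the Lie algebra of $2\times2$ trace-zero matrices over $\mathbb F$. Equitable basis: $x=\begin{pmatrix}1&0\\0&-1\end{pmatrix}$, $y=\begin{pmatrix}-1&2\\0&1\end{pmatrix}$, $z=\begin{pmatrix}-1&0\\-2&1\end{pmatrix}$, and $L=\mathbb Zx\oplus\mathbb Zy\oplus\mathbb Zz$. Let $x^*=\begin{pmatrix}1&-1\\1&-1\end{pmatrix}$, $y^*=\begin{pmatrix}0&0\\1&0\end{pmatrix}$, $z^*=\begin{pmatrix}0&-1\\0&0\end{pmatrix}$; $G$ is the subgroup of $\mathrm{Aut}_{\mathbb F}(\mathfrak{sl}_2)$ generated by $\exp(\mathrm{ad}\,x^* ),\exp(\mathrm{ad}\,y^* ),\exp(\mathrm{ad}\,z^* )$. $\mathrm{Aut}_{\mathbb Z}(L)$ is the group of Lie algebra automorphisms $\varphi$ of $\mathfrak{sl}_2$ with $\varphi(L)=L$. For distinct $u,v\in\{x,y,z\}$, $(u\,v)$ is the $\mathbb F$-linear map interchanging $u,v$ and fixing the third basis element, and $-(u\,v)$ is its negative. *)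

theory Defs
  imports "HOL-Algebra.Algebra"
begin

datatype 'a m2 = M2 'a 'a 'a 'a  (* entries (1,1) (1,2) (2,1) (2,2) *)

fun madd :: "'a::field m2 \<Rightarrow> 'a m2 \<Rightarrow> 'a m2" where
  "madd (M2 p q r s) (M2 p2 q2 r2 s2) = M2 (p + p2) (q + q2) (r + r2) (s + s2)"

fun msub :: "'a::field m2 \<Rightarrow> 'a m2 \<Rightarrow> 'a m2" where
  "msub (M2 p q r s) (M2 p2 q2 r2 s2) = M2 (p - p2) (q - q2) (r - r2) (s - s2)"

fun mneg :: "'a::field m2 \<Rightarrow> 'a m2" where
  "mneg (M2 p q r s) = M2 (- p) (- q) (- r) (- s)"

fun msmult :: "'a::field \<Rightarrow> 'a m2 \<Rightarrow> 'a m2" where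
  "msmult k (M2 p q r s) = M2 (k * p) (k * q) (k * r) (k * s)"

fun mmul :: "'a::field m2 \<Rightarrow> 'a m2 \<Rightarrow> 'a m2" where
  "mmul (M2 p q r s) (M2 p2 q2 r2 s2) =
     M2 (p * p2 + q * r2) (p * q2 + q * s2) (r * p2 + s * r2) (r * q2 + s * s2)"

fun mtrace :: "'a::field m2 \<Rightarrow> 'a" where
  "mtrace (M2 p q r s) = p + s"

definition sl2 :: "'a::field_char_0 m2 set" where
  "sl2 = {A. mtrace A = 0}"

definition br :: "'a::field m2 \<Rightarrow> 'a m2 \<Rightarrow> 'a m2" where
  "br A B = msub (mmul A B) (mmul B A)"

definition lie_aut :: "('a::field_char_0 m2 \<Rightarrow> 'a m2) \<Rightarrow> bool" where
  "lie_aut \<phi> \<longleftrightarrow> \<phi> \<in> Bij sl2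
     \<and> (\<forall>k. \<forall>A\<in>sl2. \<forall>B\<in>sl2. \<phi> (madd (msmult k A) B) = madd (msmult k (\<phi> A)) (\<phi> B))
     \<and> (\<forall>A\<in>sl2. \<forall>B\<in>sl2. \<phi> (br A B) = br (\<phi> A) (\<phi> B))"

definition ex :: "'a::field_char_0 m2" where "ex = M2 1 0 0 (-1)"
definition ey :: "'a::field_char_0 m2" where "ey = M2 (-1) 2 0 1"
definition ez :: "'a::field_char_0 m2" where "ez = M2 (-1) 0 (-2) 1"

definition Lat :: "'a::field_char_0 m2 set" where
  "Lat = {madd (msmult (of_int a) ex) (madd (msmult (of_int b) ey) (msmult (of_int c) ez))
          | a b c :: int. True}"

definition AutZ :: "('a::field_char_0 m2 \<Rightarrow> 'a m2) set" where
  "AutZ = {\<phi>. lie_aut \<phi> \<and> \<phi> ` Lat = Lat}"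

text \<open>Coordinates w.r.t. the equitable basis:
  a x + b y + c z = M2 (a-b-c) (2b) (-2c) (-a+b+c).\<close>
fun cy :: "'a::field_char_0 m2 \<Rightarrow> 'a" where "cy (M2 p q r s) = q / 2"
fun cz :: "'a::field_char_0 m2 \<Rightarrow> 'a" where "cz (M2 p q r s) = - r / 2"
fun cx :: "'a::field_char_0 m2 \<Rightarrow> 'a" where "cx (M2 p q r s) = p + q / 2 - r / 2"

definition lin_map :: "'a::field_char_0 m2 \<Rightarrow> 'a m2 \<Rightarrow> 'a m2 \<Rightarrow> ('a m2 \<Rightarrow> 'a m2)" where
  "lin_map u v w = (\<lambda>A\<in>sl2. madd (msmult (cx A) u) (madd (msmult (cy A) v) (msmult (cz A) w)))"

definition neg_swap_xy :: "'a::field_char_0 m2 \<Rightarrow> 'a m2" where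
  "neg_swap_xy = lin_map (mneg ey) (mneg ex) (mneg ez)"
definition neg_swap_yz :: "'a::field_char_0 m2 \<Rightarrow> 'a m2" where
  "neg_swap_yz = lin_map (mneg ex) (mneg ez) (mneg ey)"
definition neg_swap_zx :: "'a::field_char_0 m2 \<Rightarrow> 'a m2" where
  "neg_swap_zx = lin_map (mneg ez) (mneg ey) (mneg ex)"

text \<open>exp(ad u) for u with u^2 = 0 (so (ad u)^3 = 0): 1 + ad u + (ad u)^2/2.\<close>
definition exp_ad :: "'a::field_char_0 m2 \<Rightarrow> ('a m2 \<Rightarrow> 'a m2)" where
  "exp_ad u = (\<lambda>A\<in>sl2. madd A (madd (br u A) (msmult (1/2) (br u (br u A)))))"

definition xs :: "'a::field_char_0 m2" where "xs = M2 1 (-1) 1 (-1)"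
definition ys :: "'a::field_char_0 m2" where "ys = M2 0 0 1 0"
definition zs :: "'a::field_char_0 m2" where "zs = M2 0 (-1) 0 0"

definition Ggrp :: "('a::field_char_0 m2 \<Rightarrow> 'a m2) set" where
  "Ggrp = generate (BijGroup sl2) {exp_ad xs, exp_ad ys, exp_ad zs}"

definition internal_semidirect :: "('g, 'b) monoid_scheme \<Rightarrow> 'g set \<Rightarrow> 'g set \<Rightarrow> 'g set \<Rightarrow> bool" where
  "internal_semidirect Gr K H N \<longleftrightarrow>
     subgroup K Gr \<and> subgroup H Gr \<and> normal N (Gr\<lparr>carrier := K\<rparr>)
     \<and> H \<inter> N = {\<one>\<^bsub>Gr\<^esub>} \<and> H <#>\<^bsub>Gr\<^esub> N = K"

end

theory Submission
  imports Defs
begin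


lemma (in group) abstract_semidirect:
  assumes K: "subgroup K G" and N: "subgroup N G" and NK: "N \<subseteq> K"
    and sK: "\<sigma> \<in> K" and sN: "\<sigma> \<notin> N" and ss: "\<sigma> \<otimes> \<sigma> = \<one>"
    and cov: "\<forall>k\<in>K. k \<in> N \<or> \<sigma> \<otimes> k \<in> N"
  shows "internal_semidirect G K (generate G {\<sigma>}) N \<and> card (generate G {\<sigma>}) = 2"
proof -
  have sC: "\<sigma> \<in> carrier G" using subgroup.mem_carrier[OF K sK] .
  have invs: "inv \<sigma> = \<sigma>" using inv_equality[OF ss sC sC] .
  have sub2: "subgroup {\<one>, \<sigma>} G"
    by (rule subgroupI) (use sC ss invs in auto)
  have gen: "generate G {\<sigma>} = {\<one>, \<sigma>}"
  proof
    show "generate G {\<sigma>} \<subseteq> {\<one>, \<sigma>}" using generate_subgroup_incl[OF _ sub2] by auto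
    show "{\<one>, \<sigma>} \<subseteq> generate G {\<sigma>}" using generate.one[of G "{\<sigma>}"] generate.incl[of \<sigma> "{\<sigma>}" G] by auto
  qed
  have one_N: "\<one> \<in> N" using subgroup.one_closed[OF N] .
  have sne: "\<sigma> \<noteq> \<one>" using sN one_N by auto
  have oneK: "\<one> \<in> K" using subgroup.one_closed[OF K] .
  have KC: "K \<subseteq> carrier G" using subgroup.subset[OF K] .
  have NC: "N \<subseteq> carrier G" using subgroup.subset[OF N] .
  have HK: "subgroup {\<one>, \<sigma>} G" by (rule sub2)
  have inter: "{\<one>, \<sigma>} \<inter> N = {\<one>}" using one_N sN by auto
  have prod: "{\<one>, \<sigma>} <#> N = K"
  proof
    show "{\<one>, \<sigma>} <#> N \<subseteq> K"
      unfolding set_mult_def using NK sK oneK subgroup.m_closed[OF K] by auto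
    show "K \<subseteq> {\<one>, \<sigma>} <#> N"
    proof
      fix k assume k: "k \<in> K"
      have kC: "k \<in> carrier G" using k KC by auto
      show "k \<in> {\<one>, \<sigma>} <#> N"
      proof (cases "k \<in> N")
        case True then show ?thesis unfolding set_mult_def using kC by force
      next
        case False
        then have m: "\<sigma> \<otimes> k \<in> N" using cov k by auto
        have "k = \<sigma> \<otimes> (\<sigma> \<otimes> k)" using ss sC kC by (simp add: m_assoc[symmetric])
        then show ?thesis unfolding set_mult_def using m by blast
      qed
    qed
  qed
  have norm: "normal N (G\<lparr>carrier := K\<rparr>)"
  proof -
    interpret GK: group "G\<lparr>carrier := K\<rparr>" using subgroup_imp_group[OF K] .
    have subNK: "subgroup N (G\<lparr>carrier := K\<rparr>)" using subgroup_incl[OF N K NK] .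
    have key: "\<And>n. n \<in> N \<Longrightarrow> \<sigma> \<otimes> n \<otimes> \<sigma> \<in> N"
    proof (rule ccontr)
      fix n assume n: "n \<in> N" and nn: "\<sigma> \<otimes> n \<otimes> \<sigma> \<notin> N"
      have nC: "n \<in> carrier G" using n NC by auto
      have inK: "\<sigma> \<otimes> n \<otimes> \<sigma> \<in> K" using sK n NK subgroup.m_closed[OF K] by auto
      then have "\<sigma> \<otimes> (\<sigma> \<otimes> n \<otimes> \<sigma>) \<in> N" using cov nn by auto
      moreover have "\<sigma> \<otimes> (\<sigma> \<otimes> n \<otimes> \<sigma>) = n \<otimes> \<sigma>" using ss sC nC by (simp add: m_assoc[symmetric])
      ultimately have "n \<otimes> \<sigma> \<in> N" by simp
      then have "inv n \<otimes> (n \<otimes> \<sigma>) \<in> N" using n subgroup.m_closed[OF N] subgroup.m_inv_closed[OF N] by blast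
      moreover have "inv n \<otimes> (n \<otimes> \<sigma>) = \<sigma>" using nC sC by (simp add: m_assoc[symmetric])
      ultimately show False using sN by simp
    qed
    have "\<forall>x\<in>K. \<forall>h\<in>N. x \<otimes> h \<otimes> inv x \<in> N"
    proof (intro ballI)
      fix x h assume x: "x \<in> K" and h: "h \<in> N"
      have xC: "x \<in> carrier G" using x KC by auto
      have hC: "h \<in> carrier G" using h NC by auto
      show "x \<otimes> h \<otimes> inv x \<in> N"
      proof (cases "x \<in> N")
        case True then show ?thesis
          using h subgroup.m_closed[OF N] subgroup.m_inv_closed[OF N] by blast
      next
        case False
        then have m: "\<sigma> \<otimes> x \<in> N" using cov x by auto
        define m' where "m' = \<sigma> \<otimes> x"
        have m'C: "m' \<in> carrier G" using m m'_def NC by auto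
        have xe: "x = \<sigma> \<otimes> m'" unfolding m'_def using ss sC xC by (simp add: m_assoc[symmetric])
        have n': "m' \<otimes> h \<otimes> inv m' \<in> N"
          using m h subgroup.m_closed[OF N] subgroup.m_inv_closed[OF N] m'_def by blast
        have "x \<otimes> h \<otimes> inv x = \<sigma> \<otimes> (m' \<otimes> h \<otimes> inv m') \<otimes> \<sigma>"
          using xe sC m'C hC invs by (simp add: inv_mult_group m_assoc)
        then show ?thesis using key[OF n'] by simp
      qed
    qed
    then show ?thesis
      using GK.normal_inv_iff subNK m_inv_consistent[OF K] by auto
  qed
  show ?thesis
    unfolding internal_semidirect_def gen using K HK norm inter prod sne by auto
qed


lemma sl2_iff[simp]: "M2 p q r s \<in> sl2 \<longleftrightarrow> p + s = 0"
  by (simp add: sl2_def)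

lemma mmul_assoc: "mmul (mmul A B) C = mmul A (mmul B C)"
  by (cases A; cases B; cases C) (simp add: algebra_simps)

lemma mmul_msub_left: "mmul (msub A B) C = msub (mmul A C) (mmul B C)"
  by (cases A; cases B; cases C) (simp add: algebra_simps)

lemma mmul_msub_right: "mmul C (msub A B) = msub (mmul C A) (mmul C B)"
  by (cases A; cases B; cases C) (simp add: algebra_simps)

lemma mmul_I_left: "mmul (M2 1 0 0 1) A = A"
  by (cases A) simp
lemma mmul_I_right: "mmul A (M2 1 0 0 1) = A"
  by (cases A) simp

definition lm :: "int \<Rightarrow> int \<Rightarrow> int \<Rightarrow> 'a::field_char_0 m2" where
  "lm p q r = M2 (of_int p) (2 * of_int q) (2 * of_int r) (- of_int p)"

lemma Lat_iff: "A \<in> (Lat :: 'a::field_char_0 m2 set) \<longleftrightarrow> (\<exists>p q r. A = lm p q r)"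
proof
  assume "A \<in> Lat"
  then obtain a b c :: int where A: "A = madd (msmult (of_int a) ex) (madd (msmult (of_int b) ey) (msmult (of_int c) ez))"
    unfolding Lat_def by auto
  have "A = lm (a - b - c) b (-c)" unfolding A lm_def ex_def ey_def ez_def by (simp add: algebra_simps)
  then show "\<exists>p q r. A = lm p q r" by blast
next
  assume "\<exists>p q r. A = lm p q r"
  then obtain p q r where A: "A = lm p q r" by blast
  have "A = madd (msmult (of_int (p + q - r)) ex) (madd (msmult (of_int q) ey) (msmult (of_int (-r)) ez))"
    unfolding A lm_def ex_def ey_def ez_def by (simp add: algebra_simps)
  then show "A \<in> Lat" unfolding Lat_def by blast
qed

lemma lm_sl2[simp]: "lm p q r \<in> sl2" by (simp add: lm_def)
lemma Lat_sl2: "Lat \<subseteq> sl2" by (auto simp: Lat_iff)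

definition Z2 :: "'a::field_char_0 m2" where "Z2 = M2 0 0 0 0"

lemma Z2_sl2[simp]: "Z2 \<in> sl2" by (simp add: Z2_def)
lemma smult_sl2[simp]: "A \<in> sl2 \<Longrightarrow> msmult k A \<in> sl2"
  by (cases A) (simp add: sl2_def, metis distrib_left mult_zero_right)
lemma madd_sl2[simp]: "A \<in> sl2 \<Longrightarrow> B \<in> sl2 \<Longrightarrow> madd A B \<in> sl2"
  by (cases A; cases B) (simp add: sl2_def algebra_simps)
lemma br_sl2[simp]: "br A B \<in> sl2"
  by (cases A; cases B) (simp add: sl2_def br_def algebra_simps)

lemma la_bij: "lie_aut \<phi> \<Longrightarrow> \<phi> \<in> Bij sl2" by (simp add: lie_aut_def)
lemma la_sl2: "lie_aut \<phi> \<Longrightarrow> A \<in> sl2 \<Longrightarrow> \<phi> A \<in> sl2"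
  using la_bij Bij_imp_funcset by fastforce
lemma la_inj: "lie_aut \<phi> \<Longrightarrow> inj_on \<phi> sl2"
  using la_bij by (auto simp: Bij_def bij_betw_def)
lemma la_lin: "lie_aut \<phi> \<Longrightarrow> A \<in> sl2 \<Longrightarrow> B \<in> sl2 \<Longrightarrow> \<phi> (madd (msmult k A) B) = madd (msmult k (\<phi> A)) (\<phi> B)"
  by (simp add: lie_aut_def)
lemma la_br: "lie_aut \<phi> \<Longrightarrow> A \<in> sl2 \<Longrightarrow> B \<in> sl2 \<Longrightarrow> \<phi> (br A B) = br (\<phi> A) (\<phi> B)"
  by (simp add: lie_aut_def)

lemma la_zero: assumes "lie_aut \<phi>" shows "\<phi> Z2 = Z2"
proof -
  have "\<phi> (madd (msmult (-1) Z2) Z2) = madd (msmult (-1) (\<phi> Z2)) (\<phi> Z2)"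
    using la_lin[OF assms] by simp
  moreover have "madd (msmult (-1) Z2) Z2 = (Z2::'a m2)" by (simp add: Z2_def)
  moreover have "madd (msmult (-1) M) M = (Z2::'a m2)" for M by (cases M) (simp add: Z2_def)
  ultimately show ?thesis by simp
qed

lemma madd_Z2: "madd A Z2 = A" by (cases A) (simp add: Z2_def)

lemma la_smult: assumes "lie_aut \<phi>" "A \<in> sl2" shows "\<phi> (msmult k A) = msmult k (\<phi> A)"
  using la_lin[OF assms(1) assms(2) Z2_sl2, of k] la_zero[OF assms(1)] by (simp add: madd_Z2)

lemma la_add: assumes "lie_aut \<phi>" "A \<in> sl2" "B \<in> sl2" shows "\<phi> (madd A B) = madd (\<phi> A) (\<phi> B)"
proof -
  have "msmult 1 M = M" for M :: "'a m2" by (cases M) simp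
  then show ?thesis using la_lin[OF assms, of 1] by simp
qed

definition hh :: "'a::field_char_0 m2" where "hh = M2 1 0 0 (-1)"
definition EE :: "'a::field_char_0 m2" where "EE = M2 0 2 0 0"
definition FF :: "'a::field_char_0 m2" where "FF = M2 0 0 2 0"

lemma hh_sl2[simp]: "hh \<in> sl2" and EE_sl2[simp]: "EE \<in> sl2" and FF_sl2[simp]: "FF \<in> sl2"
  by (simp_all add: hh_def EE_def FF_def)

lemma decomp: assumes "M2 p q r s \<in> sl2"
  shows "M2 p q r s = madd (msmult p hh) (madd (msmult (q/2) EE) (msmult (r/2) FF))"
  using assms by (simp add: hh_def EE_def FF_def add_eq_0_iff2 eq_neg_iff_add_eq_0[symmetric])

lemma la_fix_id: assumes "lie_aut \<phi>" "\<phi> hh = hh" "\<phi> EE = EE" "\<phi> FF = FF"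
  shows "\<phi> = (\<lambda>x\<in>sl2. x)"
proof
  fix A
  show "\<phi> A = (\<lambda>x\<in>sl2. x) A"
  proof (cases "A \<in> sl2")
    case True
    obtain p q r s where A: "A = M2 p q r s" by (cases A)
    have "\<phi> A = \<phi> (madd (msmult p hh) (madd (msmult (q/2) EE) (msmult (r/2) FF)))"
      using decomp[OF True[unfolded A]] A by metis
    also have "\<dots> = madd (msmult p hh) (madd (msmult (q/2) EE) (msmult (r/2) FF))"
      using assms by (simp add: la_add la_smult)
    also have "\<dots> = A" using decomp[OF True[unfolded A]] A by metis
    finally show ?thesis using True by simp
  next
    case False
    then show ?thesis using la_bij[OF assms(1)] by (simp add: Bij_def extensional_def)
  qed
qed


definition gm :: "int \<Rightarrow> int \<Rightarrow> int \<Rightarrow> int \<Rightarrow> 'a::field_char_0 m2" where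
  "gm a b c d = M2 (of_int a) (of_int b) (of_int c) (of_int d)"

definition cjz :: "int \<Rightarrow> int \<Rightarrow> int \<Rightarrow> int \<Rightarrow> 'a::field_char_0 m2 \<Rightarrow> 'a m2" where
  "cjz a b c d = (\<lambda>A\<in>sl2. mmul (mmul (gm a b c d) A) (gm d (-b) (-c) a))"

lemma cjz_sl2[simp]: "A \<in> sl2 \<Longrightarrow> cjz a b c d A \<in> sl2"
  unfolding cjz_def gm_def
  by (cases A) (simp add: algebra_simps add_eq_0_iff2 eq_neg_iff_add_eq_0[symmetric])

lemma cjz_app: "A \<in> sl2 \<Longrightarrow> cjz a b c d A = mmul (mmul (gm a b c d) A) (gm d (-b) (-c) a)"
  by (simp add: cjz_def)

lemma gm_mul: "mmul (gm a b c d) (gm a2 b2 c2 d2) = (gm (a * a2+b * c2) (a * b2+b * d2) (c * a2+d * c2) (c * b2+d * d2) :: 'a::field_char_0 m2)"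
  by (simp add: gm_def)

lemma cjz_comp: "compose sl2 (cjz a b c d) (cjz a2 b2 c2 d2) =
   (cjz (a * a2+b * c2) (a * b2+b * d2) (c * a2+d * c2) (c * b2+d * d2) :: 'a::field_char_0 m2 \<Rightarrow> 'a m2)"
proof
  fix A :: "'a m2"
  show "compose sl2 (cjz a b c d) (cjz a2 b2 c2 d2) A = cjz (a * a2+b * c2) (a * b2+b * d2) (c * a2+d * c2) (c * b2+d * d2) A"
  proof (cases "A \<in> sl2")
    case True
    have e: "gm (c * b2 + d * d2) (-(a * b2 + b * d2)) (-(c * a2 + d * c2)) (a * a2 + b * c2)
      = mmul (gm d2 (-b2) (-c2) a2) (gm d (-b) (-c) a :: 'a m2)"
      by (simp add: gm_mul algebra_simps)
    have i: "cjz a2 b2 c2 d2 A \<in> sl2" using True by simp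
    have "compose sl2 (cjz a b c d) (cjz a2 b2 c2 d2) A = cjz a b c d (cjz a2 b2 c2 d2 A)"
      using True by (simp add: compose_def)
    also have "\<dots> = mmul (mmul (gm a b c d) (cjz a2 b2 c2 d2 A)) (gm d (-b) (-c) a)"
      by (rule cjz_app[OF i])
    also have "\<dots> = mmul (mmul (gm (a * a2 + b * c2) (a * b2 + b * d2) (c * a2 + d * c2) (c * b2 + d * d2)) A)
         (gm (c * b2 + d * d2) (-(a * b2 + b * d2)) (-(c * a2 + d * c2)) (a * a2 + b * c2))"
      unfolding e gm_mul[symmetric] using True by (simp add: cjz_app mmul_assoc)
    also have "\<dots> = cjz (a * a2 + b * c2) (a * b2 + b * d2) (c * a2 + d * c2) (c * b2 + d * d2) A"
      using True by (simp add: cjz_app)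
    finally show ?thesis .
  next
    case False then show ?thesis by (simp add: compose_def cjz_def)
  qed
qed

lemma cjz_one: "cjz 1 0 0 1 = (\<lambda>x\<in>sl2. x)"
  by (rule ext) (simp add: cjz_def gm_def mmul_I_left mmul_I_right)

lemma cjz_bij: assumes "a * d - b * c = 1" shows "(cjz a b c d :: 'a::field_char_0 m2 \<Rightarrow> 'a m2) \<in> Bij sl2"
proof -
  have c1: "compose sl2 (cjz a b c d) (cjz d (-b) (-c) a) = (\<lambda>x\<in>sl2. x :: 'a m2)"
    using assms by (simp add: cjz_comp algebra_simps cjz_one[symmetric])
  have c2: "compose sl2 (cjz d (-b) (-c) a) (cjz a b c d) = (\<lambda>x\<in>sl2. x :: 'a m2)"
    using assms by (simp add: cjz_comp algebra_simps cjz_one[symmetric])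
  have "bij_betw (cjz a b c d :: 'a m2 \<Rightarrow> 'a m2) sl2 sl2"
  proof (rule bij_betw_byWitness[where f' = "cjz d (-b) (-c) a"])
    show "\<forall>x\<in>sl2. cjz d (- b) (- c) a (cjz a b c d x) = (x :: 'a m2)"
    proof
      fix x :: "'a m2" assume "x \<in> sl2" then show "cjz d (- b) (- c) a (cjz a b c d x) = x"
        using fun_cong[OF c2, of x] by (simp add: compose_def)
    qed
    show "\<forall>x\<in>sl2. cjz a b c d (cjz d (- b) (- c) a x) = (x :: 'a m2)"
    proof
      fix x :: "'a m2" assume "x \<in> sl2" then show "cjz a b c d (cjz d (- b) (- c) a x) = x"
        using fun_cong[OF c1, of x] by (simp add: compose_def)
    qed
  qed auto
  then show ?thesis by (simp add: Bij_def cjz_def)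
qed

lemma adj_mul: assumes "a * d - b * c = 1"
  shows "mmul (gm d (-b) (-c) a) (gm a b c d) = (M2 1 0 0 1 :: 'a::field_char_0 m2)"
proof -
  have "of_int (a * d - b * c) = (1::'a)" using assms by simp
  then have "of_int a * of_int d - of_int b * of_int c = (1::'a)" by simp
  then show ?thesis by (simp add: gm_def algebra_simps)
qed

lemma cjz_lie: assumes "a * d - b * c = 1" shows "lie_aut (cjz a b c d :: 'a::field_char_0 m2 \<Rightarrow> 'a m2)"
  unfolding lie_aut_def
proof (intro conjI allI ballI)
  show "cjz a b c d \<in> Bij sl2" using cjz_bij[OF assms] .
next
  fix k :: 'a and A B :: "'a m2" assume A: "A \<in> sl2" and B: "B \<in> sl2"
  show "cjz a b c d (madd (msmult k A) B) = madd (msmult k (cjz a b c d A)) (cjz a b c d B)"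
  proof -
    have AB: "madd (msmult k A) B \<in> sl2" using A B by simp
    show ?thesis unfolding cjz_app[OF AB] cjz_app[OF A] cjz_app[OF B]
      by (cases A; cases B) (simp add: gm_def algebra_simps)
  qed
next
  fix A B :: "'a m2" assume A: "A \<in> sl2" and B: "B \<in> sl2"
  let ?g = "gm a b c d :: 'a m2" and ?h = "gm d (-b) (-c) a :: 'a m2"
  have "br (mmul (mmul ?g A) ?h) (mmul (mmul ?g B) ?h) =
        msub (mmul ?g (mmul A (mmul (mmul ?h ?g) (mmul B ?h)))) (mmul ?g (mmul B (mmul (mmul ?h ?g) (mmul A ?h))))"
    by (simp add: br_def mmul_assoc)
  also have "\<dots> = mmul (mmul ?g (br A B)) ?h"
    by (simp add: adj_mul[OF assms] mmul_I_left br_def mmul_msub_left mmul_msub_right mmul_assoc)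
  finally show "cjz a b c d (br A B) = br (cjz a b c d A) (cjz a b c d B)"
    using A B by (simp add: cjz_app)
qed

lemma cjz_lat_sub: "cjz a b c d ` Lat \<subseteq> (Lat :: 'a::field_char_0 m2 set)"
proof
  fix B :: "'a m2" assume "B \<in> cjz a b c d ` Lat"
  then obtain p q r where B: "B = cjz a b c d (lm p q r)" by (auto simp: Lat_iff)
  have "B = lm (a * d*p + 2 * b * d*r - 2 * a * c*q + b * c*p) (a * a*q - a * b*p - b * b*r) (c * d*p + d * d*r - c * c*q)"
    unfolding B by (simp add: cjz_app lm_def gm_def algebra_simps)
  then show "B \<in> Lat" by (auto simp: Lat_iff)
qed

lemma cjz_lat: assumes "a * d - b * c = 1" shows "cjz a b c d ` Lat = (Lat :: 'a::field_char_0 m2 set)"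
proof
  show "cjz a b c d ` Lat \<subseteq> Lat" by (rule cjz_lat_sub)
  have c1: "compose sl2 (cjz a b c d) (cjz d (-b) (-c) a) = (\<lambda>x\<in>sl2. x :: 'a m2)"
    using assms by (simp add: cjz_comp algebra_simps cjz_one[symmetric])
  show "Lat \<subseteq> cjz a b c d ` (Lat :: 'a m2 set)"
  proof
    fix A :: "'a m2" assume A: "A \<in> Lat"
    then have As: "A \<in> sl2" using Lat_sl2 by auto
    have "A = cjz a b c d (cjz d (-b) (-c) a A)" using fun_cong[OF c1, of A] As by (simp add: compose_def)
    moreover have "cjz d (-b) (-c) a A \<in> Lat" using cjz_lat_sub A by blast
    ultimately show "A \<in> cjz a b c d ` Lat" by blast
  qed
qed

lemma cjz_AutZ: assumes "a * d - b * c = 1" shows "cjz a b c d \<in> (AutZ :: ('a::field_char_0 m2 \<Rightarrow> 'a m2) set)"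
  unfolding AutZ_def using cjz_lie[OF assms] cjz_lat[OF assms] by auto


abbreviation BG :: "('a::field_char_0 m2 \<Rightarrow> 'a m2) monoid" where "BG \<equiv> BijGroup sl2"

lemma grpBG: "group (BG :: ('a::field_char_0 m2 \<Rightarrow> 'a m2) monoid)" by (rule group_BijGroup)

lemma BG_mult: "f \<in> Bij sl2 \<Longrightarrow> g \<in> Bij sl2 \<Longrightarrow> g \<otimes>\<^bsub>BG\<^esub> f = compose sl2 g f"
  by (simp add: BijGroup_def)

lemma BG_one: "\<one>\<^bsub>BG\<^esub> = (\<lambda>x\<in>sl2. x)" by (simp add: BijGroup_def)
lemma BG_carrier: "carrier BG = Bij sl2" by (simp add: BijGroup_def)

lemma la_comp: assumes f: "lie_aut f" and g: "lie_aut g" shows "lie_aut (compose sl2 g f)"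
  unfolding lie_aut_def
proof (intro conjI allI ballI)
  show "compose sl2 g f \<in> Bij sl2" using la_bij[OF f] la_bij[OF g] compose_Bij by blast
next
  fix k and A B :: "'a m2" assume A: "A \<in> sl2" and B: "B \<in> sl2"
  show "compose sl2 g f (madd (msmult k A) B) = madd (msmult k (compose sl2 g f A)) (compose sl2 g f B)"
    using A B la_sl2[OF f] by (simp add: compose_def la_lin[OF f] la_lin[OF g])
next
  fix A B :: "'a m2" assume A: "A \<in> sl2" and B: "B \<in> sl2"
  show "compose sl2 g f (br A B) = br (compose sl2 g f A) (compose sl2 g f B)"
    using A B la_sl2[OF f] by (simp add: compose_def la_br[OF f] la_br[OF g])
qed

lemma la_image: "lie_aut f \<Longrightarrow> f ` sl2 = sl2"
  using la_bij by (auto simp: Bij_def bij_betw_def)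

lemma la_inv: assumes f: "lie_aut f" shows "lie_aut (\<lambda>x\<in>sl2. inv_into sl2 f x)"
  unfolding lie_aut_def
proof (intro conjI allI ballI)
  show "(\<lambda>x\<in>sl2. inv_into sl2 f x) \<in> Bij sl2" using restrict_inv_into_Bij[OF la_bij[OF f]] .
next
  have inj: "inj_on f sl2" using la_inj[OF f] .
  have im: "f ` sl2 = sl2" using la_image[OF f] .
  have mem: "A \<in> sl2 \<Longrightarrow> inv_into sl2 f A \<in> sl2" for A using Bij_inv_into_mem[OF la_bij[OF f]] by blast
  have fi: "A \<in> sl2 \<Longrightarrow> f (inv_into sl2 f A) = A" for A using im f_inv_into_f by metis
  have if_: "A \<in> sl2 \<Longrightarrow> inv_into sl2 f (f A) = A" for A using inv_into_f_f[OF inj] by blast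
  {
  fix k and A B :: "'a m2" assume A: "A \<in> sl2" and B: "B \<in> sl2"
  have "madd (msmult k A) B = f (madd (msmult k (inv_into sl2 f A)) (inv_into sl2 f B))"
    using A B mem fi la_lin[OF f] by simp
  then show "(\<lambda>x\<in>sl2. inv_into sl2 f x) (madd (msmult k A) B) = madd (msmult k ((\<lambda>x\<in>sl2. inv_into sl2 f x) A)) ((\<lambda>x\<in>sl2. inv_into sl2 f x) B)"
    using A B mem if_ la_sl2[OF f] by simp
  }
  {
  fix A B :: "'a m2" assume A: "A \<in> sl2" and B: "B \<in> sl2"
  have "br A B = f (br (inv_into sl2 f A) (inv_into sl2 f B))"
    using A B mem fi la_br[OF f] by simp
  then show "(\<lambda>x\<in>sl2. inv_into sl2 f x) (br A B) = br ((\<lambda>x\<in>sl2. inv_into sl2 f x) A) ((\<lambda>x\<in>sl2. inv_into sl2 f x) B)"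
    using A B mem if_ la_sl2[OF f] by simp
  }
qed

lemma AutZ_sub: "subgroup (AutZ :: ('a::field_char_0 m2 \<Rightarrow> 'a m2) set) BG"
proof (rule group.subgroupI[OF grpBG])
  show "AutZ \<subseteq> carrier (BG :: ('a m2 \<Rightarrow> 'a m2) monoid)"
    by (auto simp: AutZ_def BG_carrier la_bij)
  show "AutZ \<noteq> ({} :: ('a m2 \<Rightarrow> 'a m2) set)" using cjz_AutZ[of 1 1 0 0] by auto
next
  fix f :: "'a m2 \<Rightarrow> 'a m2" assume "f \<in> AutZ"
  then have f: "lie_aut f" and L: "f ` Lat = Lat" by (auto simp: AutZ_def)
  have invf: "inv\<^bsub>BG\<^esub> f = (\<lambda>x\<in>sl2. inv_into sl2 f x)" using inv_BijGroup[OF la_bij[OF f]] .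
  have inj: "inj_on f sl2" using la_inj[OF f] .
  have "(\<lambda>x\<in>sl2. inv_into sl2 f x) ` Lat = Lat"
  proof
    show "(\<lambda>x\<in>sl2. inv_into sl2 f x) ` Lat \<subseteq> Lat"
    proof
      fix y :: "'a m2" assume "y \<in> (\<lambda>x\<in>sl2. inv_into sl2 f x) ` Lat"
      then obtain x where x: "x \<in> Lat" "y = inv_into sl2 f x" using Lat_sl2 by auto
      then obtain z :: "'a m2" where z: "z \<in> Lat" "x = f z" using L by auto
      then have "y = z" using x inv_into_f_f[OF inj] Lat_sl2 by auto
      then show "y \<in> Lat" using z by simp
    qed
    show "Lat \<subseteq> (\<lambda>x\<in>sl2. inv_into sl2 f x) ` Lat"
    proof
      fix z :: "'a m2" assume z: "z \<in> Lat"
      then have "f z \<in> Lat" "inv_into sl2 f (f z) = z" using L inv_into_f_f[OF inj] Lat_sl2 by auto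
      then show "z \<in> (\<lambda>x\<in>sl2. inv_into sl2 f x) ` Lat" using Lat_sl2 by force
    qed
  qed
  then show "inv\<^bsub>BG\<^esub> f \<in> AutZ" unfolding invf AutZ_def using la_inv[OF f] by simp
next
  fix f g :: "'a m2 \<Rightarrow> 'a m2" assume "f \<in> AutZ" "g \<in> AutZ"
  then have f: "lie_aut f" "f ` Lat = Lat" and g: "lie_aut g" "g ` Lat = Lat" by (auto simp: AutZ_def)
  have "compose sl2 f g ` Lat = f ` (g ` Lat)"
    using Lat_sl2 by (force simp: compose_def)
  then show "f \<otimes>\<^bsub>BG\<^esub> g \<in> AutZ"
    using f g la_comp[OF g(1) f(1)] by (simp add: BG_mult la_bij AutZ_def)
qed

definition Sset :: "('a::field_char_0 m2 \<Rightarrow> 'a m2) set" where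
  "Sset = {cjz a b c d | a b c d. a * d - b * c = 1}"

lemma Sset_I: "a * d - b * c = 1 \<Longrightarrow> cjz a b c d \<in> Sset" by (auto simp: Sset_def)

lemma exp_xs: "exp_ad xs = (cjz 2 (-1) 1 0 :: 'a::field_char_0 m2 \<Rightarrow> 'a m2)"
proof (rule ext)
  fix A :: "'a m2"
  show "exp_ad xs A = cjz 2 (-1) 1 0 A"
    by (cases A) (simp add: exp_ad_def cjz_def gm_def xs_def br_def field_simps)
qed
lemma exp_ys: "exp_ad ys = (cjz 1 0 1 1 :: 'a::field_char_0 m2 \<Rightarrow> 'a m2)"
proof (rule ext)
  fix A :: "'a m2"
  show "exp_ad ys A = cjz 1 0 1 1 A"
    by (cases A) (simp add: exp_ad_def cjz_def gm_def ys_def br_def field_simps)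
qed
lemma exp_zs: "exp_ad zs = (cjz 1 (-1) 0 1 :: 'a::field_char_0 m2 \<Rightarrow> 'a m2)"
proof (rule ext)
  fix A :: "'a m2"
  show "exp_ad zs A = cjz 1 (-1) 0 1 A"
    by (cases A) (simp add: exp_ad_def cjz_def gm_def zs_def br_def field_simps)
qed

lemma cjz_inv: assumes "a * d - b * c = 1"
  shows "inv\<^bsub>BG\<^esub> (cjz a b c d :: 'a::field_char_0 m2 \<Rightarrow> 'a m2) = cjz d (-b) (-c) a"
proof (rule group.inv_equality[OF grpBG])
  have d: "d * a - (-b) * (-c) = 1" using assms by (simp add: algebra_simps)
  show "cjz d (- b) (- c) a \<otimes>\<^bsub>BG\<^esub> (cjz a b c d :: 'a m2 \<Rightarrow> 'a m2) = \<one>\<^bsub>BG\<^esub>"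
    using assms by (simp add: BG_mult cjz_bij[OF assms] cjz_bij[OF d] cjz_comp BG_one algebra_simps cjz_one[symmetric])
  show "(cjz a b c d :: 'a m2 \<Rightarrow> 'a m2) \<in> carrier BG" using cjz_bij[OF assms] by (simp add: BG_carrier)
  show "(cjz d (- b) (- c) a :: 'a m2 \<Rightarrow> 'a m2) \<in> carrier BG" using cjz_bij[OF d] by (simp add: BG_carrier)
qed

lemma Ggrp_S: "(Ggrp :: ('a::field_char_0 m2 \<Rightarrow> 'a m2) set) \<subseteq> Sset"
proof
  fix f :: "'a m2 \<Rightarrow> 'a m2" assume "f \<in> Ggrp"
  then show "f \<in> Sset" unfolding Ggrp_def
  proof (induction rule: generate.induct)
    case one
    then show ?case unfolding Sset_def BG_one cjz_one[symmetric] by force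
  next
    case (incl h)
    then show ?case by (auto simp: exp_xs exp_ys exp_zs intro!: Sset_I)
  next
    case (inv h)
    then have "h \<in> Sset" by (auto simp: exp_xs exp_ys exp_zs intro!: Sset_I)
    then obtain a b c d where h: "h = cjz a b c d" "a * d - b * c = 1" unfolding Sset_def by auto
    have "d * a - (-b) * (-c) = 1" using h by (simp add: algebra_simps)
    then show ?case unfolding h(1) cjz_inv[OF h(2)] Sset_def by blast
  next
    case (eng h1 h2)
    obtain a b c d where h1: "h1 = cjz a b c d" "a * d - b * c = 1" using eng.IH(1) unfolding Sset_def by auto
    obtain a2 b2 c2 d2 where h2: "h2 = cjz a2 b2 c2 d2" "a2 * d2 - b2 * c2 = 1" using eng.IH(2) unfolding Sset_def by auto
    have det: "(a * a2 + b * c2) * (c * b2 + d * d2) - (a * b2 + b * d2) * (c * a2 + d * c2) = (a * d - b * c) * (a2 * d2 - b2 * c2)"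
      by (simp add: algebra_simps)
    have "h1 \<otimes>\<^bsub>BG\<^esub> h2 = cjz (a * a2 + b * c2) (a * b2 + b * d2) (c * a2 + d * c2) (c * b2 + d * d2)"
      unfolding h1(1) h2(1) BG_mult[OF cjz_bij[OF h2(2)] cjz_bij[OF h1(2)]] cjz_comp ..
    then show ?case using Sset_I det h1(2) h2(2) by simp
  qed
qed

lemma S_AutZ: "Sset \<subseteq> AutZ" unfolding Sset_def using cjz_AutZ by blast

lemma Ggrp_AutZ: "Ggrp \<subseteq> AutZ" using Ggrp_S S_AutZ by blast

lemma Ggrp_sub: "subgroup (Ggrp :: ('a::field_char_0 m2 \<Rightarrow> 'a m2) set) BG"
  unfolding Ggrp_def
  by (rule group.generate_is_subgroup[OF grpBG])
     (auto simp: BG_carrier exp_xs exp_ys exp_zs intro!: cjz_bij)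

lemma U_m1: "cjz 1 (-1) 0 1 \<in> Ggrp" unfolding Ggrp_def exp_zs[symmetric] by (auto intro: generate.incl)
lemma L_1: "cjz 1 0 1 1 \<in> Ggrp" unfolding Ggrp_def exp_ys[symmetric] by (auto intro: generate.incl)
lemma U_1: "(cjz 1 1 0 1 :: 'a::field_char_0 m2 \<Rightarrow> 'a m2) \<in> Ggrp"
proof -
  have "inv\<^bsub>BG\<^esub> (exp_ad zs :: 'a m2 \<Rightarrow> 'a m2) \<in> Ggrp" unfolding Ggrp_def by (auto intro: generate.inv)
  moreover have "inv\<^bsub>BG\<^esub> (cjz 1 (-1) 0 1 :: 'a::field_char_0 m2 \<Rightarrow> 'a m2) = cjz 1 1 0 1"
    using cjz_inv[where a=1 and b="-1" and c=0 and d=1] by simp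
  ultimately show ?thesis by (simp add: exp_zs)
qed
lemma L_m1: "(cjz 1 0 (-1) 1 :: 'a::field_char_0 m2 \<Rightarrow> 'a m2) \<in> Ggrp"
proof -
  have "inv\<^bsub>BG\<^esub> (exp_ad ys :: 'a m2 \<Rightarrow> 'a m2) \<in> Ggrp" unfolding Ggrp_def by (auto intro: generate.inv)
  moreover have "inv\<^bsub>BG\<^esub> (cjz 1 0 1 1 :: 'a::field_char_0 m2 \<Rightarrow> 'a m2) = cjz 1 0 (-1) 1"
    using cjz_inv[where a=1 and b=0 and c=1 and d=1] by simp
  ultimately show ?thesis by (simp add: exp_ys)
qed


lemma involution_AutZ:
  fixes f :: "'a::field_char_0 m2 \<Rightarrow> 'a m2"
  assumes ext: "f \<in> extensional sl2"
    and sl: "\<And>A. A \<in> sl2 \<Longrightarrow> f A \<in> sl2"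
    and inv: "\<And>A. A \<in> sl2 \<Longrightarrow> f (f A) = A"
    and lin: "\<And>k A B. A \<in> sl2 \<Longrightarrow> B \<in> sl2 \<Longrightarrow> f (madd (msmult k A) B) = madd (msmult k (f A)) (f B)"
    and brk: "\<And>A B. A \<in> sl2 \<Longrightarrow> B \<in> sl2 \<Longrightarrow> f (br A B) = br (f A) (f B)"
    and lat: "f ` Lat \<subseteq> Lat"
  shows "f \<in> AutZ" "f \<otimes>\<^bsub>BG\<^esub> f = \<one>\<^bsub>BG\<^esub>"
proof -
  have bij: "f \<in> Bij sl2"
  proof -
    have "bij_betw f sl2 sl2"
      by (rule bij_betw_byWitness[where f'=f]) (use inv sl in auto)
    then show ?thesis using ext by (simp add: Bij_def)
  qed
  have "Lat \<subseteq> f ` Lat"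
  proof
    fix A :: "'a m2" assume A: "A \<in> Lat"
    then have "f A \<in> Lat" "f (f A) = A" using lat inv Lat_sl2 by auto
    then show "A \<in> f ` Lat" by (metis imageI)
  qed
  then show "f \<in> AutZ" unfolding AutZ_def lie_aut_def using bij lin brk lat by auto
  show "f \<otimes>\<^bsub>BG\<^esub> f = \<one>\<^bsub>BG\<^esub>"
  proof -
    have "compose sl2 f f = (\<lambda>x\<in>sl2. x)"
    proof
      fix x show "compose sl2 f f x = (\<lambda>x\<in>sl2. x) x"
        by (cases "x \<in> sl2") (simp_all add: compose_def inv)
    qed
    then show ?thesis by (simp add: BG_mult[OF bij bij] BG_one)
  qed
qed

lemma lin_map_app: "M2 p q r s \<in> sl2 \<Longrightarrow> lin_map u v w (M2 p q r s) =
   madd (msmult (p + q / 2 - r / 2) u) (madd (msmult (q / 2) v) (msmult (- r / 2) w))"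
  by (simp add: lin_map_def)

lemma lin_map_ext: "lin_map u v w \<in> extensional sl2" by (simp add: lin_map_def)

lemma comb_lin: "madd (msmult (k * a1 + a2) u) (madd (msmult (k * b1 + b2) v) (msmult (k * c1 + c2) w)) =
  madd (msmult k (madd (msmult a1 u) (madd (msmult b1 v) (msmult c1 w))))
       (madd (msmult a2 u) (madd (msmult b2 v) (msmult c2 w)))"
  by (cases u; cases v; cases w) (simp add: algebra_simps)

lemma cx_lin: "cx (madd (msmult k A) B) = k * cx A + cx B"
  by (cases A; cases B) (simp add: field_simps)
lemma cy_lin: "cy (madd (msmult k A) B) = k * cy A + cy B"
  by (cases A; cases B) (simp add: field_simps)
lemma cz_lin: "cz (madd (msmult k A) B) = k * cz A + cz B"
  by (cases A; cases B) (simp add: field_simps)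

lemma lin_map_lin: assumes A: "A \<in> sl2" and B: "B \<in> sl2"
  shows "lin_map u v w (madd (msmult k A) B) = madd (msmult k (lin_map u v w A)) (lin_map u v w B)"
proof -
  have AB: "madd (msmult k A) B \<in> sl2" using A B by simp
  show ?thesis using AB A B unfolding lin_map_def by (simp add: cx_lin cy_lin cz_lin comb_lin)
qed

lemma sigma_facts:
  fixes f :: "'a::field_char_0 m2 \<Rightarrow> 'a m2"
  assumes ext: "f \<in> extensional sl2"
    and app: "\<And>p q r. f (M2 p q r (-p)) = g p q r"
    and sl: "\<And>p q r. g p q r \<in> sl2"
    and inv: "\<And>p q r. f (g p q r) = M2 p q r (-p)"
    and lin: "\<And>k A B. A \<in> sl2 \<Longrightarrow> B \<in> sl2 \<Longrightarrow> f (madd (msmult k A) B) = madd (msmult k (f A)) (f B)"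
    and brk: "\<And>p q r p2 q2 r2. f (br (M2 p q r (-p)) (M2 p2 q2 r2 (-p2))) = br (g p q r) (g p2 q2 r2)"
    and lat: "\<And>p q r. \<exists>p2 q2 r2. f (lm p q r) = lm p2 q2 r2"
  shows "f \<in> AutZ" "f \<otimes>\<^bsub>BG\<^esub> f = \<one>\<^bsub>BG\<^esub>"
proof -
  have form: "A \<in> sl2 \<Longrightarrow> \<exists>p q r. A = M2 p q r (-p)" for A :: "'a m2"
    by (cases A) (auto simp: add_eq_0_iff2 eq_neg_iff_add_eq_0[symmetric])
  have latS: "f ` Lat \<subseteq> Lat" using lat by (auto simp: Lat_iff)
  have sl': "f A \<in> sl2" if AA: "A \<in> sl2" for A
  proof -
    obtain p q r where "A = M2 p q r (-p)" using form[OF AA] by blast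
    then show ?thesis using app sl by simp
  qed
  have inv': "f (f A) = A" if AA: "A \<in> sl2" for A
  proof -
    obtain p q r where "A = M2 p q r (-p)" using form[OF AA] by blast
    then show ?thesis using app inv by simp
  qed
  have brk': "f (br A B) = br (f A) (f B)" if AA: "A \<in> sl2" and BB: "B \<in> sl2" for A B
  proof -
    obtain p q r where "A = M2 p q r (-p)" using form[OF AA] by blast
    moreover obtain p2 q2 r2 where "B = M2 p2 q2 r2 (-p2)" using form[OF BB] by blast
    ultimately show ?thesis using app brk by simp
  qed
  show "f \<in> AutZ" "f \<otimes>\<^bsub>BG\<^esub> f = \<one>\<^bsub>BG\<^esub>"
    using involution_AutZ[OF ext sl' inv' lin brk' latS] by auto
qed


lemma xy_app: "p + s = 0 \<Longrightarrow> (neg_swap_xy :: 'a::field_char_0 m2 \<Rightarrow> 'a m2) (M2 p q r s) = M2 (p - r) (r - q - 2*p) (-r) (r - p)"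
  by (simp add: neg_swap_xy_def lin_map_def ex_def ey_def ez_def field_simps add_eq_0_iff2 eq_neg_iff_add_eq_0[symmetric])
lemma yz_app: "p + s = 0 \<Longrightarrow> (neg_swap_yz :: 'a::field_char_0 m2 \<Rightarrow> 'a m2) (M2 p q r s) = M2 (-p) r q p"
  by (simp add: neg_swap_yz_def lin_map_def ex_def ey_def ez_def field_simps add_eq_0_iff2 eq_neg_iff_add_eq_0[symmetric])
lemma zx_app: "p + s = 0 \<Longrightarrow> (neg_swap_zx :: 'a::field_char_0 m2 \<Rightarrow> 'a m2) (M2 p q r s) = M2 (p + q) (-q) (2*p + q - r) (-(p + q))"
  by (simp add: neg_swap_zx_def lin_map_def ex_def ey_def ez_def field_simps add_eq_0_iff2 eq_neg_iff_add_eq_0[symmetric])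

lemma sl2_form: "A \<in> sl2 \<Longrightarrow> \<exists>p q r. A = M2 p q r (-p)"
  by (cases A) (auto simp: add_eq_0_iff2 eq_neg_iff_add_eq_0[symmetric])

lemma xy_facts: "(neg_swap_xy :: 'a::field_char_0 m2 \<Rightarrow> 'a m2) \<in> AutZ"
   "(neg_swap_xy :: 'a::field_char_0 m2 \<Rightarrow> 'a m2) \<otimes>\<^bsub>BG\<^esub> neg_swap_xy = \<one>\<^bsub>BG\<^esub>"
proof -
  let ?f = "neg_swap_xy :: 'a m2 \<Rightarrow> 'a m2"
  have ext: "?f \<in> extensional sl2" by (simp add: neg_swap_xy_def lin_map_ext)
  have sl: "?f A \<in> sl2" if "A \<in> sl2" for A using sl2_form[OF that] by (auto simp: xy_app)
  have inv: "?f (?f A) = A" if "A \<in> sl2" for A using sl2_form[OF that] by (auto simp: xy_app)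
  have lin: "?f (madd (msmult k A) B) = madd (msmult k (?f A)) (?f B)" if "A \<in> sl2" "B \<in> sl2" for k A B
    unfolding neg_swap_xy_def using lin_map_lin that by blast
  have brk: "?f (br A B) = br (?f A) (?f B)" if "A \<in> sl2" "B \<in> sl2" for A B
    using sl2_form[OF that(1)] sl2_form[OF that(2)]
    by (auto simp: xy_app br_def algebra_simps)
  have lat: "?f ` Lat \<subseteq> Lat"
  proof
    fix B assume "B \<in> ?f ` Lat"
    then obtain p q r where B: "B = ?f (lm p q r)" by (auto simp: Lat_iff)
    have "B = lm (p - 2*r) (-(p + q - r)) (-r)" unfolding B lm_def by (simp add: xy_app algebra_simps)
    then show "B \<in> Lat" by (auto simp: Lat_iff)
  qed
  show "?f \<in> AutZ" "?f \<otimes>\<^bsub>BG\<^esub> ?f = \<one>\<^bsub>BG\<^esub>" using involution_AutZ[OF ext sl inv lin brk lat] by auto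
qed

lemma yz_facts: "(neg_swap_yz :: 'a::field_char_0 m2 \<Rightarrow> 'a m2) \<in> AutZ"
   "(neg_swap_yz :: 'a::field_char_0 m2 \<Rightarrow> 'a m2) \<otimes>\<^bsub>BG\<^esub> neg_swap_yz = \<one>\<^bsub>BG\<^esub>"
proof -
  let ?f = "neg_swap_yz :: 'a m2 \<Rightarrow> 'a m2"
  have ext: "?f \<in> extensional sl2" by (simp add: neg_swap_yz_def lin_map_ext)
  have sl: "?f A \<in> sl2" if "A \<in> sl2" for A using sl2_form[OF that] by (auto simp: yz_app)
  have inv: "?f (?f A) = A" if "A \<in> sl2" for A using sl2_form[OF that] by (auto simp: yz_app)
  have lin: "?f (madd (msmult k A) B) = madd (msmult k (?f A)) (?f B)" if "A \<in> sl2" "B \<in> sl2" for k A B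
    unfolding neg_swap_yz_def using lin_map_lin that by blast
  have brk: "?f (br A B) = br (?f A) (?f B)" if "A \<in> sl2" "B \<in> sl2" for A B
    using sl2_form[OF that(1)] sl2_form[OF that(2)]
    by (auto simp: yz_app br_def algebra_simps)
  have lat: "?f ` Lat \<subseteq> Lat"
  proof
    fix B assume "B \<in> ?f ` Lat"
    then obtain p q r where B: "B = ?f (lm p q r)" by (auto simp: Lat_iff)
    have "B = lm (-p) r q" unfolding B lm_def by (simp add: yz_app algebra_simps)
    then show "B \<in> Lat" by (auto simp: Lat_iff)
  qed
  show "?f \<in> AutZ" "?f \<otimes>\<^bsub>BG\<^esub> ?f = \<one>\<^bsub>BG\<^esub>" using involution_AutZ[OF ext sl inv lin brk lat] by auto
qed

lemma zx_facts: "(neg_swap_zx :: 'a::field_char_0 m2 \<Rightarrow> 'a m2) \<in> AutZ"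
   "(neg_swap_zx :: 'a::field_char_0 m2 \<Rightarrow> 'a m2) \<otimes>\<^bsub>BG\<^esub> neg_swap_zx = \<one>\<^bsub>BG\<^esub>"
proof -
  let ?f = "neg_swap_zx :: 'a m2 \<Rightarrow> 'a m2"
  have ext: "?f \<in> extensional sl2" by (simp add: neg_swap_zx_def lin_map_ext)
  have sl: "?f A \<in> sl2" if "A \<in> sl2" for A using sl2_form[OF that] by (auto simp: zx_app)
  have inv: "?f (?f A) = A" if "A \<in> sl2" for A using sl2_form[OF that] by (auto simp: zx_app)
  have lin: "?f (madd (msmult k A) B) = madd (msmult k (?f A)) (?f B)" if "A \<in> sl2" "B \<in> sl2" for k A B
    unfolding neg_swap_zx_def using lin_map_lin that by blast
  have brk: "?f (br A B) = br (?f A) (?f B)" if "A \<in> sl2" "B \<in> sl2" for A B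
    using sl2_form[OF that(1)] sl2_form[OF that(2)]
    by (auto simp: zx_app br_def algebra_simps)
  have lat: "?f ` Lat \<subseteq> Lat"
  proof
    fix B assume "B \<in> ?f ` Lat"
    then obtain p q r where B: "B = ?f (lm p q r)" by (auto simp: Lat_iff)
    have "B = lm (p + 2*q) (-q) (p + q - r)" unfolding B lm_def by (simp add: zx_app algebra_simps)
    then show "B \<in> Lat" by (auto simp: Lat_iff)
  qed
  show "?f \<in> AutZ" "?f \<otimes>\<^bsub>BG\<^esub> ?f = \<one>\<^bsub>BG\<^esub>" using involution_AutZ[OF ext sl inv lin brk lat] by auto
qed

lemma cjz_EE: "cjz a b c d (EE :: 'a::field_char_0 m2) = M2 (of_int (-2* a * c)) (of_int (2 * a * a)) (of_int (-2* c * c)) (of_int (2* a * c))"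
  by (simp add: cjz_app EE_def gm_def algebra_simps)

lemma not_S_12: assumes "f EE = M2 x (-2) y z" shows "f \<notin> (Sset :: ('a::field_char_0 m2 \<Rightarrow> 'a m2) set)"
proof
  assume "f \<in> Sset"
  then obtain a b c d where f: "f = cjz a b c d" unfolding Sset_def by auto
  have eq: "(M2 (of_int (-2*a * c)) (of_int (2 * a * a)) (of_int (-2 * c * c)) (of_int (2*a * c)) :: 'a m2) = M2 x (-2) y z"
    using assms unfolding f cjz_EE .
  then have "(of_int (2 * a * a)::'a) = -2" by simp
  then have "(of_int (2 * a * a)::'a) = of_int (-2)" by simp
  then have "2 * a * a = -2" by (simp only: of_int_eq_iff)
  moreover have "0 \<le> a * a" by simp
  ultimately show False by simp
qed

lemma not_S_21: assumes "f EE = M2 x y 2 z" shows "f \<notin> (Sset :: ('a::field_char_0 m2 \<Rightarrow> 'a m2) set)"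
proof
  assume "f \<in> Sset"
  then obtain a b c d where f: "f = cjz a b c d" unfolding Sset_def by auto
  have eq: "(M2 (of_int (-2*a * c)) (of_int (2 * a * a)) (of_int (-2 * c * c)) (of_int (2*a * c)) :: 'a m2) = M2 x y 2 z"
    using assms unfolding f cjz_EE .
  then have "(of_int (-2 * c * c)::'a) = 2" by simp
  then have "(of_int (-2 * c * c)::'a) = of_int 2" by simp
  then have "-2 * c * c = 2" by (simp only: of_int_eq_iff)
  moreover have "0 \<le> c * c" by simp
  ultimately show False by simp
qed

lemma xy_EE: "(neg_swap_xy :: 'a::field_char_0 m2 \<Rightarrow> 'a m2) EE = M2 0 (-2) 0 0"
  by (simp add: EE_def xy_app)
lemma yz_EE: "(neg_swap_yz :: 'a::field_char_0 m2 \<Rightarrow> 'a m2) EE = M2 0 0 2 0"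
  by (simp add: EE_def yz_app)
lemma zx_EE: "(neg_swap_zx :: 'a::field_char_0 m2 \<Rightarrow> 'a m2) EE = M2 2 (-2) 2 (-2)"
  by (simp add: EE_def zx_app)

lemma xy_notG: "(neg_swap_xy :: 'a::field_char_0 m2 \<Rightarrow> 'a m2) \<notin> Ggrp"
  by (metis not_S_12 xy_EE Ggrp_S subsetD)
lemma yz_notG: "(neg_swap_yz :: 'a::field_char_0 m2 \<Rightarrow> 'a m2) \<notin> Ggrp"
  by (metis not_S_21 yz_EE Ggrp_S subsetD)
lemma zx_notG: "(neg_swap_zx :: 'a::field_char_0 m2 \<Rightarrow> 'a m2) \<notin> Ggrp"
  by (metis not_S_12 zx_EE Ggrp_S subsetD)



definition good :: "('a::field_char_0 m2 \<Rightarrow> 'a m2) \<Rightarrow> bool" where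
  "good \<chi> \<longleftrightarrow> \<chi> \<in> Ggrp \<or> \<chi> \<otimes>\<^bsub>BG\<^esub> neg_swap_xy \<in> Ggrp"

lemma AutZ_C: "\<chi> \<in> AutZ \<Longrightarrow> \<chi> \<in> carrier BG"
  by (simp add: AutZ_def BG_carrier la_bij)
lemma AutZ_la: "\<chi> \<in> AutZ \<Longrightarrow> lie_aut \<chi>" by (simp add: AutZ_def)
lemma AutZ_lat: "\<chi> \<in> AutZ \<Longrightarrow> A \<in> Lat \<Longrightarrow> \<chi> A \<in> Lat" by (auto simp: AutZ_def)
lemma G_C: "g \<in> Ggrp \<Longrightarrow> g \<in> carrier BG"
  using Ggrp_AutZ AutZ_C by blast
lemma mult_app: "f \<in> carrier BG \<Longrightarrow> g \<in> carrier BG \<Longrightarrow> A \<in> sl2 \<Longrightarrow> (g \<otimes>\<^bsub>BG\<^esub> f) A = g (f A)"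
  by (simp add: BG_mult BG_carrier compose_def)
lemma AutZ_mult: "f \<in> AutZ \<Longrightarrow> g \<in> AutZ \<Longrightarrow> g \<otimes>\<^bsub>BG\<^esub> f \<in> AutZ"
  using subgroup.m_closed[OF AutZ_sub] by blast

lemma good_step:
  fixes \<chi> \<psi> :: "'a::field_char_0 m2 \<Rightarrow> 'a m2"
  assumes p: "\<psi> \<in> Ggrp" and c: "\<chi> \<in> AutZ" and g: "good (\<psi> \<otimes>\<^bsub>BG\<^esub> \<chi>)"
  shows "good \<chi>"
proof -
  interpret G: group "BG :: ('a m2 \<Rightarrow> 'a m2) monoid" by (rule grpBG)
  have pC: "\<psi> \<in> carrier BG" using G_C p by blast
  have cC: "\<chi> \<in> carrier BG" using AutZ_C c by blast
  have sC: "(neg_swap_xy :: 'a m2 \<Rightarrow> 'a m2) \<in> carrier BG" using AutZ_C xy_facts(1) by blast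
  have ip: "inv\<^bsub>BG\<^esub> \<psi> \<in> Ggrp" using subgroup.m_inv_closed[OF Ggrp_sub p] .
  have e1: "\<chi> = inv\<^bsub>BG\<^esub> \<psi> \<otimes>\<^bsub>BG\<^esub> (\<psi> \<otimes>\<^bsub>BG\<^esub> \<chi>)"
    using pC cC by (simp add: G.m_assoc[symmetric])
  have e2: "\<chi> \<otimes>\<^bsub>BG\<^esub> neg_swap_xy = inv\<^bsub>BG\<^esub> \<psi> \<otimes>\<^bsub>BG\<^esub> (\<psi> \<otimes>\<^bsub>BG\<^esub> \<chi> \<otimes>\<^bsub>BG\<^esub> neg_swap_xy)"
    using pC cC sC by (simp add: G.m_assoc[symmetric])
  have g': "\<psi> \<otimes>\<^bsub>BG\<^esub> \<chi> \<in> Ggrp \<or> \<psi> \<otimes>\<^bsub>BG\<^esub> \<chi> \<otimes>\<^bsub>BG\<^esub> neg_swap_xy \<in> Ggrp"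
    using g by (simp add: good_def)
  show ?thesis using g'
  proof
    assume "\<psi> \<otimes>\<^bsub>BG\<^esub> \<chi> \<in> Ggrp"
    then have "\<chi> \<in> Ggrp" using e1 ip subgroup.m_closed[OF Ggrp_sub] by metis
    then show ?thesis by (simp add: good_def)
  next
    assume "\<psi> \<otimes>\<^bsub>BG\<^esub> \<chi> \<otimes>\<^bsub>BG\<^esub> neg_swap_xy \<in> Ggrp"
    then have "\<chi> \<otimes>\<^bsub>BG\<^esub> neg_swap_xy \<in> Ggrp" using e2 ip subgroup.m_closed[OF Ggrp_sub] by metis
    then show ?thesis by (simp add: good_def)
  qed
qed

lemma cjz_lm: "cjz a b c d (lm p q r :: 'a::field_char_0 m2) =
   lm (a * d * p + 2 * b * d * r - 2 * a * c * q + b * c * p) (a * a * q - a * b * p - b * b * r) (c * d * p + d * d * r - c * c * q)"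
  by (simp add: cjz_app lm_def gm_def algebra_simps)

lemma EE_lm: "(EE :: 'a::field_char_0 m2) = lm 0 1 0" by (simp add: EE_def lm_def)
lemma hh_lm: "(hh :: 'a::field_char_0 m2) = lm 1 0 0" by (simp add: hh_def lm_def)
lemma EE_Lat: "EE \<in> Lat" by (auto simp: Lat_iff EE_lm)
lemma hh_Lat: "hh \<in> Lat" by (auto simp: Lat_iff hh_lm)

lemma lm_inj: "(lm p q r :: 'a::field_char_0 m2) = lm p2 q2 r2 \<longleftrightarrow> p = p2 \<and> q = q2 \<and> r = r2"
  by (auto simp: lm_def)

lemma br_hE: "br hh EE = msmult 2 (EE :: 'a::field_char_0 m2)"
  by (simp add: br_def hh_def EE_def)
lemma br_hF: "br hh FF = msmult (-2) (FF :: 'a::field_char_0 m2)"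
  by (simp add: br_def hh_def FF_def)
lemma br_EF: "br EE FF = msmult 4 (hh :: 'a::field_char_0 m2)"
  by (simp add: br_def hh_def EE_def FF_def)

lemma nil_field:
  fixes e1 e2 e3 :: "'a::field_char_0"
  assumes "br H (M2 e1 e2 e3 (-e1)) = msmult 2 (M2 e1 e2 e3 (-e1))" "H \<in> sl2"
  shows "e1 * e1 + e2 * e3 = 0"
proof -
  obtain a b c where H: "H = M2 a b c (-a)" using sl2_form[OF assms(2)] by blast
  have bc: "br H (M2 e1 e2 e3 (-e1)) = M2 (b * e3 - c * e2) (2 * (a * e2 - b * e1)) (2 * (c * e1 - a * e3)) (c * e2 - b * e3)"
    unfolding H by (simp add: br_def algebra_simps)
  have "M2 (b * e3 - c * e2) (2 * (a * e2 - b * e1)) (2 * (c * e1 - a * e3)) (c * e2 - b * e3) = M2 (2 * e1) (2 * e2) (2 * e3) (2 * (-e1))"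
    using assms(1) unfolding bc by simp
  then have q1: "b * e3 - c * e2 = 2 * e1" and q2': "2 * (a * e2 - b * e1) = 2 * e2" and q3': "2 * (c * e1 - a * e3) = 2 * e3"
    by (simp_all only: m2.inject)
  have q2: "a * e2 - b * e1 = e2" using q2' by (simp only: mult_cancel_left) simp
  have q3: "c * e1 - a * e3 = e3" using q3' by (simp only: mult_cancel_left) simp
  have "e1 * (b * e3 - c * e2) + e3 * (a * e2 - b * e1) + e2 * (c * e1 - a * e3) = 0"
    by (simp add: algebra_simps)
  then have "2 * (e1 * e1) + 2 * (e2 * e3) = 0" unfolding q1 q2 q3 by (simp add: algebra_simps)
  then have "2 * (e1 * e1 + e2 * e3) = 0" by (simp add: algebra_simps)
  then show ?thesis by (metis mult_eq_0_iff zero_neq_numeral)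
qed

lemma la_E_rel:
  assumes "\<chi> \<in> AutZ" shows "br (\<chi> hh) (\<chi> EE) = msmult 2 (\<chi> EE)"
proof -
  have "\<chi> (br hh EE) = br (\<chi> hh) (\<chi> EE)" using la_br[OF AutZ_la[OF assms]] by simp
  moreover have "\<chi> (br hh EE) = msmult 2 (\<chi> EE)" unfolding br_hE using la_smult[OF AutZ_la[OF assms]] by simp
  ultimately show ?thesis by simp
qed

lemma nil_lm: assumes "\<chi> \<in> AutZ" "\<chi> EE = (lm p q r :: 'a::field_char_0 m2)" shows "p * p + 4 * q * r = 0"
proof -
  have hs: "\<chi> hh \<in> sl2" using la_sl2[OF AutZ_la[OF assms(1)]] by simp
  have "br (\<chi> hh) (M2 (of_int p) (2 * of_int q) (2 * of_int r) (- of_int p)) =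
        msmult 2 (M2 (of_int p) (2 * of_int q) (2 * of_int r) (- (of_int p :: 'a)))"
    using la_E_rel[OF assms(1)] assms(2) by (simp add: lm_def)
  from nil_field[OF this hs] have "(of_int (p * p + 4 * q * r) :: 'a) = 0" by (simp add: algebra_simps)
  then show ?thesis by (simp only: of_int_eq_0_iff)
qed



lemma EE_form: assumes "\<chi> \<in> AutZ" shows "\<exists>s q r. \<chi> EE = (lm (2 * s) q r :: 'a::field_char_0 m2) \<and> s * s = - (q * r)"
proof -
  obtain p q r where e: "\<chi> EE = (lm p q r :: 'a m2)" using AutZ_lat[OF assms EE_Lat] by (auto simp: Lat_iff)
  have n: "p * p + 4 * q * r = 0" using nil_lm[OF assms e] .
  then have "p * p = 2 * (-2 * q * r)" by simp
  then have "even (p * p)" by (metis dvd_triv_left)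
  then have "even p" by simp
  then obtain s where ps: "p = 2 * s" by blast
  have "s * s = - (q * r)" using n unfolding ps by (simp add: algebra_simps)
  then show ?thesis using e ps by blast
qed

lemma unimod: assumes "\<chi> \<in> AutZ" "\<chi> EE = (lm 0 q 0 :: 'a::field_char_0 m2)" shows "q = 1 \<or> q = -1"
proof -
  have la: "lie_aut \<chi>" using AutZ_la[OF assms(1)] .
  have "EE \<in> \<chi> ` Lat" using assms(1) EE_Lat by (simp add: AutZ_def)
  then obtain A where A: "A \<in> Lat" "\<chi> A = EE" by auto
  then obtain p1 q1 r1 where Ae: "A = (lm p1 q1 r1 :: 'a m2)" by (auto simp: Lat_iff)
  have As: "A \<in> sl2" using A Lat_sl2 by auto
  have "\<chi> (msmult (of_int q) A) = msmult (of_int q) EE" using la_smult[OF la As] A by simp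
  also have "\<dots> = \<chi> EE" using assms(2) by (simp add: EE_def lm_def)
  finally have "msmult (of_int q) A = EE" using la_inj[OF la] As by (simp add: inj_on_def)
  then have "(of_int q * (2 * of_int q1) :: 'a) = 2" unfolding Ae by (simp add: lm_def EE_def)
  then have "(of_int (q * q1) :: 'a) = of_int 1" by (simp add: algebra_simps)
  then have "q * q1 = 1" by (simp only: of_int_eq_iff)
  then show ?thesis by (auto simp: zmult_eq_1_iff)
qed

lemma fixEh: assumes "\<chi> \<in> AutZ" "\<chi> EE = EE" "\<chi> hh = (hh :: 'a::field_char_0 m2)"
  shows "\<chi> = \<one>\<^bsub>BG\<^esub>"
proof -
  have la: "lie_aut \<chi>" using AutZ_la[OF assms(1)] .
  have Fs: "\<chi> FF \<in> sl2" using la_sl2[OF la] by simp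
  obtain a b c where F: "\<chi> FF = M2 a b c (-a)" using sl2_form[OF Fs] by blast
  have r1: "br hh (\<chi> FF) = msmult (-2) (\<chi> FF)"
    using la_br[OF la, of hh FF] la_smult[OF la, of FF "-2"] assms(3) by (simp add: br_hF)
  have r2: "br EE (\<chi> FF) = msmult 4 hh"
    using la_br[OF la, of EE FF] la_smult[OF la, of hh 4] assms by (simp add: br_EF)
  have "\<chi> FF = FF" using r1 r2 unfolding F by (simp add: br_def hh_def EE_def FF_def)
  then show ?thesis using la_fix_id[OF la assms(3) assms(2)] by (simp add: BG_one)
qed



lemma one_G: "\<one>\<^bsub>BG\<^esub> \<in> Ggrp" using subgroup.one_closed[OF Ggrp_sub] .

lemma U_t: "t = 1 \<or> t = -1 \<Longrightarrow> (cjz 1 t 0 1 :: 'a::field_char_0 m2 \<Rightarrow> 'a m2) \<in> Ggrp"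
  using U_1 U_m1 by auto
lemma L_t: "t = 1 \<or> t = -1 \<Longrightarrow> (cjz 1 0 t 1 :: 'a::field_char_0 m2 \<Rightarrow> 'a m2) \<in> Ggrp"
  using L_1 L_m1 by auto

lemma G_step:
  fixes \<chi> \<psi> :: "'a::field_char_0 m2 \<Rightarrow> 'a m2"
  assumes p: "\<psi> \<in> Ggrp" and c: "\<chi> \<in> carrier BG" and g: "\<psi> \<otimes>\<^bsub>BG\<^esub> \<chi> \<in> Ggrp"
  shows "\<chi> \<in> Ggrp"
proof -
  interpret G: group "BG :: ('a m2 \<Rightarrow> 'a m2) monoid" by (rule grpBG)
  have pC: "\<psi> \<in> carrier BG" using G_C p by blast
  have ip: "inv\<^bsub>BG\<^esub> \<psi> \<in> Ggrp" using subgroup.m_inv_closed[OF Ggrp_sub p] .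
  have e1: "\<chi> = inv\<^bsub>BG\<^esub> \<psi> \<otimes>\<^bsub>BG\<^esub> (\<psi> \<otimes>\<^bsub>BG\<^esub> \<chi>)"
    using pC c by (simp add: G.m_assoc[symmetric])
  show ?thesis using e1 ip g subgroup.m_closed[OF Ggrp_sub] by metis
qed

lemma fixEk: "\<forall>\<chi>. \<chi> \<in> AutZ \<longrightarrow> \<chi> EE = EE \<longrightarrow> \<chi> hh = (lm 1 k 0 :: 'a::field_char_0 m2) \<longrightarrow> \<chi> \<in> Ggrp"
proof (induction k rule: int_induct[where k = 0])
  case base
  show ?case using fixEh one_G by (metis hh_lm)
next
  case (step1 i)
  show ?case
  proof (intro allI impI)
    fix \<chi> :: "'a m2 \<Rightarrow> 'a m2" assume c: "\<chi> \<in> AutZ" and e: "\<chi> EE = EE" and h: "\<chi> hh = lm 1 (i + 1) 0"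
    let ?u = "cjz 1 1 0 1 :: 'a m2 \<Rightarrow> 'a m2"
    have uG: "?u \<in> Ggrp" by (rule U_1)
    have uA: "?u \<in> AutZ" using uG Ggrp_AutZ by blast
    have m: "?u \<otimes>\<^bsub>BG\<^esub> \<chi> \<in> AutZ" using AutZ_mult[OF c uA] .
    have "(?u \<otimes>\<^bsub>BG\<^esub> \<chi>) EE = EE" using mult_app[OF AutZ_C[OF c] AutZ_C[OF uA]] e
      by (simp add: EE_lm cjz_lm)
    moreover have "(?u \<otimes>\<^bsub>BG\<^esub> \<chi>) hh = lm 1 i 0" using mult_app[OF AutZ_C[OF c] AutZ_C[OF uA]] h
      by (simp add: cjz_lm)
    ultimately have "?u \<otimes>\<^bsub>BG\<^esub> \<chi> \<in> Ggrp" using step1.IH m by blast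
    then show "\<chi> \<in> Ggrp" using G_step[OF uG AutZ_C[OF c]] by blast
  qed
next
  case (step2 i)
  show ?case
  proof (intro allI impI)
    fix \<chi> :: "'a m2 \<Rightarrow> 'a m2" assume c: "\<chi> \<in> AutZ" and e: "\<chi> EE = EE" and h: "\<chi> hh = lm 1 (i - 1) 0"
    let ?u = "cjz 1 (-1) 0 1 :: 'a m2 \<Rightarrow> 'a m2"
    have uG: "?u \<in> Ggrp" by (rule U_m1)
    have uA: "?u \<in> AutZ" using uG Ggrp_AutZ by blast
    have m: "?u \<otimes>\<^bsub>BG\<^esub> \<chi> \<in> AutZ" using AutZ_mult[OF c uA] .
    have "(?u \<otimes>\<^bsub>BG\<^esub> \<chi>) EE = EE" using mult_app[OF AutZ_C[OF c] AutZ_C[OF uA]] e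
      by (simp add: EE_lm cjz_lm)
    moreover have "(?u \<otimes>\<^bsub>BG\<^esub> \<chi>) hh = lm 1 i 0" using mult_app[OF AutZ_C[OF c] AutZ_C[OF uA]] h
      by (simp add: cjz_lm)
    ultimately have "?u \<otimes>\<^bsub>BG\<^esub> \<chi> \<in> Ggrp" using step2.IH m by blast
    then show "\<chi> \<in> Ggrp" using G_step[OF uG AutZ_C[OF c]] by blast
  qed
qed

lemma fixE: assumes c: "\<chi> \<in> AutZ" and e: "\<chi> EE = (EE :: 'a::field_char_0 m2)" shows "\<chi> \<in> Ggrp"
proof -
  obtain a b d where h: "\<chi> hh = (lm a b d :: 'a m2)" using AutZ_lat[OF c hh_Lat] by (auto simp: Lat_iff)
  have "br (lm a b d) EE = msmult 2 (EE :: 'a m2)" using la_E_rel[OF c] e h by simp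
  then have "(of_int a :: 'a) = 1 \<and> (of_int d :: 'a) = 0" by (simp add: lm_def br_def EE_def)
  then have "a = 1 \<and> d = 0" by (metis of_int_eq_1_iff of_int_eq_0_iff)
  then show ?thesis using fixEk[of b] c e h by blast
qed

lemma sigma_EE: "(neg_swap_xy :: 'a::field_char_0 m2 \<Rightarrow> 'a m2) EE = msmult (-1) EE"
  unfolding xy_EE by (simp add: EE_def)

lemma R0: assumes c: "\<chi> \<in> AutZ" and e: "\<chi> EE = (lm 0 q 0 :: 'a::field_char_0 m2)" shows "good \<chi>"
proof -
  have "q = 1 \<or> q = -1" using unimod[OF c e] .
  then show ?thesis
  proof
    assume "q = 1"
    then have "\<chi> EE = EE" using e by (simp add: EE_lm)
    then show ?thesis using fixE[OF c] by (simp add: good_def)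
  next
    assume q: "q = -1"
    have sA: "(neg_swap_xy :: 'a m2 \<Rightarrow> 'a m2) \<in> AutZ" by (rule xy_facts(1))
    have m: "\<chi> \<otimes>\<^bsub>BG\<^esub> neg_swap_xy \<in> AutZ" using AutZ_mult[OF sA c] .
    have se: "neg_swap_xy EE = (msmult (-1) EE :: 'a m2)" by (rule sigma_EE)
    have "(\<chi> \<otimes>\<^bsub>BG\<^esub> neg_swap_xy) EE = \<chi> (msmult (-1) EE)"
      using mult_app[OF AutZ_C[OF sA] AutZ_C[OF c], of EE] se by simp
    also have "\<dots> = msmult (-1) (\<chi> EE)" using la_smult[OF AutZ_la[OF c]] by simp
    also have "\<dots> = EE" using e q by (simp add: lm_def EE_def)
    finally show ?thesis using fixE[OF m] by (simp add: good_def)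
  qed
qed

lemma Q0: assumes c: "\<chi> \<in> AutZ" and e: "\<chi> EE = (lm 0 0 r :: 'a::field_char_0 m2)" shows "good \<chi>"
proof -
  let ?u = "cjz 1 1 0 1 :: 'a m2 \<Rightarrow> 'a m2"
  let ?l = "cjz 1 0 (-1) 1 :: 'a m2 \<Rightarrow> 'a m2"
  have uG: "?u \<in> Ggrp" by (rule U_1)
  have lG: "?l \<in> Ggrp" by (rule L_m1)
  have uA: "?u \<in> AutZ" using uG Ggrp_AutZ by blast
  have lA: "?l \<in> AutZ" using lG Ggrp_AutZ by blast
  have m1: "?u \<otimes>\<^bsub>BG\<^esub> \<chi> \<in> AutZ" using AutZ_mult[OF c uA] .
  have m2: "?l \<otimes>\<^bsub>BG\<^esub> (?u \<otimes>\<^bsub>BG\<^esub> \<chi>) \<in> AutZ" using AutZ_mult[OF m1 lA] .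
  have e1: "(?u \<otimes>\<^bsub>BG\<^esub> \<chi>) EE = lm (2 * r) (-r) r"
    using mult_app[OF AutZ_C[OF c] AutZ_C[OF uA]] e by (simp add: cjz_lm)
  have e2: "(?l \<otimes>\<^bsub>BG\<^esub> (?u \<otimes>\<^bsub>BG\<^esub> \<chi>)) EE = lm 0 (-r) 0"
    using mult_app[OF AutZ_C[OF m1] AutZ_C[OF lA]] e1 by (simp add: cjz_lm)
  have "good (?l \<otimes>\<^bsub>BG\<^esub> (?u \<otimes>\<^bsub>BG\<^esub> \<chi>))" using R0[OF m2 e2] .
  then have "good (?u \<otimes>\<^bsub>BG\<^esub> \<chi>)" using good_step[OF lG m1] by blast
  then show ?thesis using good_step[OF uG c] by blast
qed



lemma int_step:
  fixes s q r :: int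
  assumes ss: "s * s = - (q * r)" and q0: "q \<noteq> 0" and r0: "r \<noteq> 0" and le: "\<bar>q\<bar> \<le> \<bar>r\<bar>"
  shows "\<exists>t. (t = 1 \<or> t = -1) \<and> \<bar>r + 2 * t * s - q\<bar> < \<bar>r\<bar>"
proof -
  have sa: "\<bar>s\<bar> * \<bar>s\<bar> = \<bar>q\<bar> * \<bar>r\<bar>" using ss by (metis abs_minus_cancel abs_mult)
  have b1: "\<bar>q\<bar> \<le> \<bar>s\<bar>"
  proof (rule ccontr)
    assume "\<not> \<bar>q\<bar> \<le> \<bar>s\<bar>"
    then have "\<bar>s\<bar> < \<bar>q\<bar>" by simp
    then have "\<bar>s\<bar> * \<bar>s\<bar> < \<bar>q\<bar> * \<bar>q\<bar>" by (intro mult_strict_mono) auto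
    also have "\<dots> \<le> \<bar>q\<bar> * \<bar>r\<bar>" using le by (intro mult_left_mono) auto
    finally show False using sa by simp
  qed
  have b2: "\<bar>s\<bar> \<le> \<bar>r\<bar>"
  proof (rule ccontr)
    assume "\<not> \<bar>s\<bar> \<le> \<bar>r\<bar>"
    then have "\<bar>r\<bar> < \<bar>s\<bar>" by simp
    then have "\<bar>r\<bar> * \<bar>r\<bar> < \<bar>s\<bar> * \<bar>s\<bar>" by (intro mult_strict_mono) auto
    moreover have "\<bar>q\<bar> * \<bar>r\<bar> \<le> \<bar>r\<bar> * \<bar>r\<bar>" using le by (intro mult_right_mono) auto
    ultimately show False using sa by simp
  qed
  have qa: "0 < \<bar>q\<bar>" using q0 by simp
  have qr: "q * r < 0"
  proof -
    have "0 \<le> s * s" by simp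
    then have "q * r \<le> 0" using ss by linarith
    moreover have "q * r \<noteq> 0" using q0 r0 by simp
    ultimately show ?thesis by (metis less_le)
  qed
  show ?thesis
  proof (cases "r > 0")
    case True
    then have "q < 0" using qr by (auto simp: mult_less_0_iff)
    show ?thesis
    proof (cases "s \<ge> 0")
      case True
      then show ?thesis using \<open>r > 0\<close> \<open>q < 0\<close> b1 b2 qa
        by (intro exI[of _ "-1"]) (auto simp: abs_if)
    next
      case False
      then show ?thesis using \<open>r > 0\<close> \<open>q < 0\<close> b1 b2 qa
        by (intro exI[of _ "1"]) (auto simp: abs_if)
    qed
  next
    case False
    then have rn: "r < 0" using r0 by simp
    then have "q > 0" using qr by (auto simp: mult_less_0_iff)
    show ?thesis
    proof (cases "s \<ge> 0")
      case True
      then show ?thesis using rn \<open>q > 0\<close> b1 b2 qa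
        by (intro exI[of _ "1"]) (auto simp: abs_if)
    next
      case False
      then show ?thesis using rn \<open>q > 0\<close> b1 b2 qa
        by (intro exI[of _ "-1"]) (auto simp: abs_if)
    qed
  qed
qed



lemma descent: "\<chi> \<in> AutZ \<Longrightarrow> \<chi> EE = (lm (2 * s) q r :: 'a::field_char_0 m2) \<Longrightarrow> good \<chi>"
proof (induction "nat (\<bar>q\<bar> + \<bar>r\<bar>)" arbitrary: \<chi> s q r rule: less_induct)
  case less
  have c: "\<chi> \<in> AutZ" and e: "\<chi> EE = (lm (2 * s) q r :: 'a m2)" using less.prems by auto
  have n: "(2 * s) * (2 * s) + 4 * q * r = 0" using nil_lm[OF c e] .
  then have ss: "s * s = - (q * r)" by (simp add: algebra_simps)
  show ?case
  proof (cases "r = 0")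
    case True
    then have "s = 0" using ss by simp
    then show ?thesis using R0[OF c] e True by simp
  next
    case r0: False
    show ?thesis
    proof (cases "q = 0")
      case True
      then have "s = 0" using ss by simp
      then show ?thesis using Q0[OF c] e True by simp
    next
      case q0: False
      show ?thesis
      proof (cases "\<bar>q\<bar> \<le> \<bar>r\<bar>")
        case True
        obtain t where t: "t = 1 \<or> t = -1" and lt: "\<bar>r + 2 * t * s - q\<bar> < \<bar>r\<bar>"
          using int_step[OF ss q0 r0 True] by blast
        let ?l = "cjz 1 0 t 1 :: 'a m2 \<Rightarrow> 'a m2"
        have lG: "?l \<in> Ggrp" using L_t[OF t] .
        have lA: "?l \<in> AutZ" using lG Ggrp_AutZ by blast
        have m: "?l \<otimes>\<^bsub>BG\<^esub> \<chi> \<in> AutZ" using AutZ_mult[OF c lA] .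
        have e2: "(?l \<otimes>\<^bsub>BG\<^esub> \<chi>) EE = lm (2 * (s - t * q)) q (r + 2 * t * s - q)"
          using mult_app[OF AutZ_C[OF c] AutZ_C[OF lA], of EE] e t by (auto simp: cjz_lm lm_inj)
        have "nat (\<bar>q\<bar> + \<bar>r + 2 * t * s - q\<bar>) < nat (\<bar>q\<bar> + \<bar>r\<bar>)" using lt by simp
        then have "good (?l \<otimes>\<^bsub>BG\<^esub> \<chi>)" using less.hyps m e2 by blast
        then show ?thesis using good_step[OF lG c] by blast
      next
        case False
        then have le: "\<bar>r\<bar> \<le> \<bar>q\<bar>" by simp
        have ss2: "s * s = - (r * q)" using ss by (simp add: algebra_simps)
        obtain t0 where t0: "t0 = 1 \<or> t0 = -1" and lt: "\<bar>q + 2 * t0 * s - r\<bar> < \<bar>q\<bar>"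
          using int_step[OF ss2 r0 q0 le] by blast
        define t where "t = - t0"
        have t: "t = 1 \<or> t = -1" using t0 t_def by auto
        have lt2: "\<bar>q - 2 * t * s - r\<bar> < \<bar>q\<bar>" using lt t_def by simp
        let ?u = "cjz 1 t 0 1 :: 'a m2 \<Rightarrow> 'a m2"
        have uG: "?u \<in> Ggrp" using U_t[OF t] .
        have uA: "?u \<in> AutZ" using uG Ggrp_AutZ by blast
        have m: "?u \<otimes>\<^bsub>BG\<^esub> \<chi> \<in> AutZ" using AutZ_mult[OF c uA] .
        have e2: "(?u \<otimes>\<^bsub>BG\<^esub> \<chi>) EE = lm (2 * (s + t * r)) (q - 2 * t * s - r) r"
          using mult_app[OF AutZ_C[OF c] AutZ_C[OF uA], of EE] e t by (auto simp: cjz_lm lm_inj)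
        have "nat (\<bar>q - 2 * t * s - r\<bar> + \<bar>r\<bar>) < nat (\<bar>q\<bar> + \<bar>r\<bar>)" using lt2 by simp
        then have "good (?u \<otimes>\<^bsub>BG\<^esub> \<chi>)" using less.hyps m e2 by blast
        then show ?thesis using good_step[OF uG c] by blast
      qed
    qed
  qed
qed

lemma cov_xy: "\<forall>k\<in>(AutZ :: ('a::field_char_0 m2 \<Rightarrow> 'a m2) set). k \<in> Ggrp \<or> neg_swap_xy \<otimes>\<^bsub>BG\<^esub> k \<in> Ggrp"
proof
  interpret G: group "BG :: ('a m2 \<Rightarrow> 'a m2) monoid" by (rule grpBG)
  fix k :: "'a m2 \<Rightarrow> 'a m2" assume k: "k \<in> AutZ"
  have kC: "k \<in> carrier BG" using AutZ_C k by blast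
  have ik: "inv\<^bsub>BG\<^esub> k \<in> AutZ" using subgroup.m_inv_closed[OF AutZ_sub k] .
  obtain s q r where "(inv\<^bsub>BG\<^esub> k) EE = (lm (2 * s) q r :: 'a m2)" using EE_form[OF ik] by blast
  then have g: "good (inv\<^bsub>BG\<^esub> k)" using descent[OF ik] by blast
  have sA: "(neg_swap_xy :: 'a m2 \<Rightarrow> 'a m2) \<in> AutZ" by (rule xy_facts(1))
  have sC: "(neg_swap_xy :: 'a m2 \<Rightarrow> 'a m2) \<in> carrier BG" using AutZ_C sA by blast
  have isg: "inv\<^bsub>BG\<^esub> (neg_swap_xy :: 'a m2 \<Rightarrow> 'a m2) = neg_swap_xy"
    using G.inv_equality[OF xy_facts(2) sC sC] .
  show "k \<in> Ggrp \<or> neg_swap_xy \<otimes>\<^bsub>BG\<^esub> k \<in> Ggrp"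
    using g unfolding good_def
  proof
    assume "inv\<^bsub>BG\<^esub> k \<in> Ggrp"
    then have "inv\<^bsub>BG\<^esub> (inv\<^bsub>BG\<^esub> k) \<in> Ggrp" using subgroup.m_inv_closed[OF Ggrp_sub] by blast
    then show ?thesis using kC by simp
  next
    assume "inv\<^bsub>BG\<^esub> k \<otimes>\<^bsub>BG\<^esub> neg_swap_xy \<in> Ggrp"
    then have "inv\<^bsub>BG\<^esub> (inv\<^bsub>BG\<^esub> k \<otimes>\<^bsub>BG\<^esub> neg_swap_xy) \<in> Ggrp" using subgroup.m_inv_closed[OF Ggrp_sub] by blast
    moreover have "inv\<^bsub>BG\<^esub> (inv\<^bsub>BG\<^esub> k \<otimes>\<^bsub>BG\<^esub> neg_swap_xy) = neg_swap_xy \<otimes>\<^bsub>BG\<^esub> k"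
      using kC sC isg by (simp add: G.inv_mult_group)
    ultimately show ?thesis by simp
  qed
qed

lemma cov_other:
  fixes \<tau> :: "'a::field_char_0 m2 \<Rightarrow> 'a m2"
  assumes tA: "\<tau> \<in> AutZ" and tG: "\<tau> \<notin> Ggrp" and tt: "\<tau> \<otimes>\<^bsub>BG\<^esub> \<tau> = \<one>\<^bsub>BG\<^esub>"
  shows "\<forall>k\<in>AutZ. k \<in> Ggrp \<or> \<tau> \<otimes>\<^bsub>BG\<^esub> k \<in> Ggrp"
proof
  interpret G: group "BG :: ('a m2 \<Rightarrow> 'a m2) monoid" by (rule grpBG)
  fix k :: "'a m2 \<Rightarrow> 'a m2" assume k: "k \<in> AutZ"
  have kC: "k \<in> carrier BG" using AutZ_C k by blast
  have tC: "\<tau> \<in> carrier BG" using AutZ_C tA by blast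
  have sA: "(neg_swap_xy :: 'a m2 \<Rightarrow> 'a m2) \<in> AutZ" by (rule xy_facts(1))
  have sC: "(neg_swap_xy :: 'a m2 \<Rightarrow> 'a m2) \<in> carrier BG" using AutZ_C sA by blast
  have isg: "inv\<^bsub>BG\<^esub> (neg_swap_xy :: 'a m2 \<Rightarrow> 'a m2) = neg_swap_xy"
    using G.inv_equality[OF xy_facts(2) sC sC] .
  have it: "inv\<^bsub>BG\<^esub> \<tau> = \<tau>" using G.inv_equality[OF tt tC tC] .
  have st: "neg_swap_xy \<otimes>\<^bsub>BG\<^esub> \<tau> \<in> Ggrp" using cov_xy tA tG by blast
  show "k \<in> Ggrp \<or> \<tau> \<otimes>\<^bsub>BG\<^esub> k \<in> Ggrp"
  proof (cases "k \<in> Ggrp")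
    case True then show ?thesis by simp
  next
    case False
    then have sk: "neg_swap_xy \<otimes>\<^bsub>BG\<^esub> k \<in> Ggrp" using cov_xy k by blast
    have "inv\<^bsub>BG\<^esub> (neg_swap_xy \<otimes>\<^bsub>BG\<^esub> \<tau>) \<otimes>\<^bsub>BG\<^esub> (neg_swap_xy \<otimes>\<^bsub>BG\<^esub> k) \<in> Ggrp"
      using st sk subgroup.m_inv_closed[OF Ggrp_sub] subgroup.m_closed[OF Ggrp_sub] by blast
    moreover have "inv\<^bsub>BG\<^esub> (neg_swap_xy \<otimes>\<^bsub>BG\<^esub> \<tau>) \<otimes>\<^bsub>BG\<^esub> (neg_swap_xy \<otimes>\<^bsub>BG\<^esub> k) = \<tau> \<otimes>\<^bsub>BG\<^esub> k"
    proof -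
      have iv: "inv\<^bsub>BG\<^esub> (neg_swap_xy \<otimes>\<^bsub>BG\<^esub> \<tau>) = \<tau> \<otimes>\<^bsub>BG\<^esub> neg_swap_xy"
        using sC tC isg it by (simp add: G.inv_mult_group)
      have ssg: "neg_swap_xy \<otimes>\<^bsub>BG\<^esub> neg_swap_xy = (\<one>\<^bsub>BG\<^esub> :: 'a m2 \<Rightarrow> 'a m2)" by (rule xy_facts(2))
      have "\<tau> \<otimes>\<^bsub>BG\<^esub> neg_swap_xy \<otimes>\<^bsub>BG\<^esub> (neg_swap_xy \<otimes>\<^bsub>BG\<^esub> k) = \<tau> \<otimes>\<^bsub>BG\<^esub> (neg_swap_xy \<otimes>\<^bsub>BG\<^esub> neg_swap_xy) \<otimes>\<^bsub>BG\<^esub> k"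
        using sC tC kC by (simp add: G.m_assoc)
      also have "\<dots> = \<tau> \<otimes>\<^bsub>BG\<^esub> k" using ssg tC by simp
      finally have "\<tau> \<otimes>\<^bsub>BG\<^esub> neg_swap_xy \<otimes>\<^bsub>BG\<^esub> (neg_swap_xy \<otimes>\<^bsub>BG\<^esub> k) = \<tau> \<otimes>\<^bsub>BG\<^esub> k" .
      then show ?thesis using iv by simp
    qed
    ultimately show ?thesis by simp
  qed
qed


theorem theorem5p6:
  shows "internal_semidirect (BijGroup (sl2::'a::field_char_0 m2 set)) AutZ
           (generate (BijGroup sl2) {neg_swap_xy}) Ggrp
       \<and> internal_semidirect (BijGroup (sl2::'a m2 set)) AutZ
           (generate (BijGroup sl2) {neg_swap_yz}) Ggrp
       \<and> internal_semidirect (BijGroup (sl2::'a m2 set)) AutZ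
           (generate (BijGroup sl2) {neg_swap_zx}) Ggrp
       \<and> card (generate (BijGroup (sl2::'a m2 set)) {neg_swap_xy}) = 2
       \<and> card (generate (BijGroup (sl2::'a m2 set)) {neg_swap_yz}) = 2
       \<and> card (generate (BijGroup (sl2::'a m2 set)) {neg_swap_zx}) = 2"
proof -
  have r1: "internal_semidirect (BijGroup (sl2::'a m2 set)) AutZ (generate (BijGroup sl2) {neg_swap_xy}) Ggrp
      \<and> card (generate (BijGroup (sl2::'a m2 set)) {neg_swap_xy}) = 2"
    by (rule group.abstract_semidirect[OF grpBG AutZ_sub Ggrp_sub Ggrp_AutZ xy_facts(1) xy_notG xy_facts(2) cov_xy])
  have r2: "internal_semidirect (BijGroup (sl2::'a m2 set)) AutZ (generate (BijGroup sl2) {neg_swap_yz}) Ggrp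
      \<and> card (generate (BijGroup (sl2::'a m2 set)) {neg_swap_yz}) = 2"
    by (rule group.abstract_semidirect[OF grpBG AutZ_sub Ggrp_sub Ggrp_AutZ yz_facts(1) yz_notG yz_facts(2)
          cov_other[OF yz_facts(1) yz_notG yz_facts(2)]])
  have r3: "internal_semidirect (BijGroup (sl2::'a m2 set)) AutZ (generate (BijGroup sl2) {neg_swap_zx}) Ggrp
      \<and> card (generate (BijGroup (sl2::'a m2 set)) {neg_swap_zx}) = 2"
    by (rule group.abstract_semidirect[OF grpBG AutZ_sub Ggrp_sub Ggrp_AutZ zx_facts(1) zx_notG zx_facts(2)
          cov_other[OF zx_facts(1) zx_notG zx_facts(2)]])
  show ?thesis using r1 r2 r3 by blast
qed

end
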